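(* Let $a,b$ be coprime positive integers with $ab\ne1$, let $X>0$ and let $u\ne1$ be positive. Then $$\operatorname{vol}(\mathcal{R}'(X))=\operatorname{vol}(\mathcal{R}(X))=\frac{X\operatorname{vol}(\mathcal{S}_{b/a})}{\sqrt{|a^2-b^2|}}.$$ Furthermore $$\mathcal{R}(X)\subseteq[-c\sqrt{X},c\sqrt{X}]\times\big(0,c\sqrt{X/|a^2-b^2|}\big],\qquad \mathcal{S}_u\subseteq[-c,c]\times(0,c],$$ for an absolute constant $c>0$.
   Context: For positive $u\ne1$ define the quadratic forms $p_u(s,t)=-2s^2-\frac{1-u^2}{|1-u^2|}t^2+\frac{4}{\sqrt{|1-u^2|}}st$, $q_u(s,t)=2s^2-\frac{1-u^2}{|1-u^2|}t^2$, $r_u(s,t)=2s^2-2\frac{1-u^2}{\sqrt{|1-u^2|}}st+\frac{1-u^2}{|1-u^2|}t^2$, and $\mathcal{S}_u=\{(s,t)\in\mathbb{R}\times\mathbb{R}_{>0}: 0<p_u(s,t)\le1,\ 0<q_u(s,t)\le1,\ r_u(s,t)>0\}$. With $Q_1(s,t)=2s^2+(a^2-b^2)t^2-4ast$, $Q_2(s,t)=-2s^2+(a^2-b^2)t^2$, $Q_3(s,t)=-2as^2+2(a^2-b^2)st-a(a^2-b^2)t^2$, define $\mathcal{R}(X)=\{(s,t)\in\mathbb{R}\times\mathbb{R}_{>0}: Q_3(s,t)<0,\ 0>Q_1(s,t)\ge -X,\ 0>Q_2(s,t)\ge -X\}$ and $\mathcal{R}'(X)=\{(s,t)\in\mathcal{R}(X):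 s(s-at)\ne0,\ s/t\ne(a^2-b^2)/(2a)\}$. *)

theory Defs
  imports "HOL-Analysis.Analysis"
begin

definition p_u :: "real \<Rightarrow> real \<Rightarrow> real \<Rightarrow> real" where
  "p_u u s t = - 2 * s^2 - ((1 - u^2) / \<bar>1 - u^2\<bar>) * t^2 + (4 / sqrt \<bar>1 - u^2\<bar>) * s * t"

definition q_u :: "real \<Rightarrow> real \<Rightarrow> real \<Rightarrow> real" where
  "q_u u s t = 2 * s^2 - ((1 - u^2) / \<bar>1 - u^2\<bar>) * t^2"

definition r_u :: "real \<Rightarrow> real \<Rightarrow> real \<Rightarrow> real" where
  "r_u u s t = 2 * s^2 - 2 * ((1 - u^2) / sqrt \<bar>1 - u^2\<bar>) * s * t
              + ((1 - u^2) / \<bar>1 - u^2\<bar>) * t^2"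

definition S_u :: "real \<Rightarrow> (real \<times> real) set" where
  "S_u u = {(s, t). t > 0 \<and> 0 < p_u u s t \<and> p_u u s t \<le> 1
                 \<and> 0 < q_u u s t \<and> q_u u s t \<le> 1 \<and> r_u u s t > 0}"

definition Q1 :: "real \<Rightarrow> real \<Rightarrow> real \<Rightarrow> real \<Rightarrow> real" where
  "Q1 a b s t = 2 * s^2 + (a^2 - b^2) * t^2 - 4 * a * s * t"

definition Q2 :: "real \<Rightarrow> real \<Rightarrow> real \<Rightarrow> real \<Rightarrow> real" where
  "Q2 a b s t = - 2 * s^2 + (a^2 - b^2) * t^2"

definition Q3 :: "real \<Rightarrow> real \<Rightarrow> real \<Rightarrow> real \<Rightarrow> real" where
  "Q3 a b s t = - 2 * a * s^2 + 2 * (a^2 - b^2) * s * t - a * (a^2 - b^2) * t^2"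

definition R_reg :: "real \<Rightarrow> real \<Rightarrow> real \<Rightarrow> (real \<times> real) set" where
  "R_reg a b X = {(s, t). t > 0 \<and> Q3 a b s t < 0
                    \<and> 0 > Q1 a b s t \<and> Q1 a b s t \<ge> - X
                    \<and> 0 > Q2 a b s t \<and> Q2 a b s t \<ge> - X}"

definition R_reg' :: "real \<Rightarrow> real \<Rightarrow> real \<Rightarrow> (real \<times> real) set" where
  "R_reg' a b X = {(s, t) \<in> R_reg a b X. s * (s - a * t) \<noteq> 0
                     \<and> s / t \<noteq> (a^2 - b^2) / (2 * a)}"

end

theory Submission
  imports Defs
begin

lemma fst_meas[measurable]: "fst \<in> borel_measurable (borel::(real\<times>real) measure)"
  by (intro borel_measurable_continuous_onI continuous_intros)
lemma snd_meas[measurable]: "snd \<in> borel_measurable (borel::(real\<times>real) measure)"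
  by (intro borel_measurable_continuous_onI continuous_intros)

lemma scale2:
  fixes A :: "(real\<times>real) set" and \<alpha> \<beta> :: real
  assumes A[measurable]: "A \<in> sets borel" and ap: "\<alpha> > 0" and bp: "\<beta> > 0"
  shows "emeasure lborel A = ennreal (\<alpha>*\<beta>) * emeasure lborel {x. (\<alpha>* fst x, \<beta>* snd x) \<in> A}"
proof -
  define B where "B = {x::real\<times>real. (\<alpha>* fst x, \<beta>* snd x) \<in> A}"
  have B[measurable]: "B \<in> sets borel"
  proof -
    have "B = (\<lambda>x. (\<alpha>* fst x, \<beta>* snd x)) -` A \<inter> space borel" by (auto simp: B_def)
    also have "\<dots> \<in> sets borel"
      by (intro measurable_sets[OF _ A] borel_measurable_continuous_onI continuous_intros)
    finally show ?thesis .
  qed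
  have "emeasure lborel A = (\<integral>\<^sup>+x. indicator A x \<partial>lborel)" by simp
  also have "\<dots> = (\<integral>\<^sup>+x. indicator A x \<partial>(lborel \<Otimes>\<^sub>M lborel))" by (simp add: lborel_prod)
  also have "\<dots> = (\<integral>\<^sup>+s. \<integral>\<^sup>+t. indicator A (s,t) \<partial>lborel \<partial>lborel)"
    by (rule lborel.nn_integral_fst[symmetric]) (simp add: lborel_prod)
  also have "\<dots> = (\<integral>\<^sup>+s. ennreal \<beta> * \<integral>\<^sup>+t. indicator A (s,\<beta>*t) \<partial>lborel \<partial>lborel)"
  proof (rule nn_integral_cong)
    fix s :: real
    show "(\<integral>\<^sup>+t. indicator A (s,t) \<partial>lborel) = ennreal \<beta> * \<integral>\<^sup>+t. indicator A (s,\<beta>*t) \<partial>lborel"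
      using nn_integral_real_affine[of "\<lambda>t. indicator A (s,t)" \<beta> 0] bp by simp
  qed
  also have "\<dots> = ennreal \<beta> * (\<integral>\<^sup>+s. \<integral>\<^sup>+t. indicator A (s,\<beta>*t) \<partial>lborel \<partial>lborel)"
    by (rule nn_integral_cmult) measurable
  also have "(\<integral>\<^sup>+s. \<integral>\<^sup>+t. indicator A (s,\<beta>*t) \<partial>lborel \<partial>lborel)
      = ennreal \<alpha> * (\<integral>\<^sup>+s. \<integral>\<^sup>+t. indicator A (\<alpha> * s,\<beta>*t) \<partial>lborel \<partial>lborel)"
    using nn_integral_real_affine[of "\<lambda>s. \<integral>\<^sup>+t. indicator A (s,\<beta>*t) \<partial>lborel" \<alpha> 0] ap by simp
  also have "(\<integral>\<^sup>+s. \<integral>\<^sup>+t. indicator A (\<alpha> * s,\<beta>*t) \<partial>lborel \<partial>lborel)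
      = (\<integral>\<^sup>+s. \<integral>\<^sup>+t. indicator B (s,t) \<partial>lborel \<partial>lborel)"
    by (simp add: B_def indicator_def)
  also have "\<dots> = (\<integral>\<^sup>+x. indicator B x \<partial>(lborel \<Otimes>\<^sub>M lborel))"
    by (rule lborel.nn_integral_fst) (simp add: lborel_prod)
  also have "\<dots> = emeasure lborel B" by (simp add: lborel_prod)
  finally have "emeasure lborel A = ennreal \<beta> * (ennreal \<alpha> * emeasure lborel B)" .
  moreover have "ennreal (\<alpha>*\<beta>) = ennreal \<beta> * ennreal \<alpha>" using ap bp by (simp add: ennreal_mult mult.commute)
  ultimately show ?thesis unfolding B_def by (simp add: mult.assoc)
qed

lemma line_null:
  fixes c :: real
  shows "{x::real\<times>real. fst x = c * snd x} \<in> null_sets lborel"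
proof -
  define L where "L = {x::real\<times>real. fst x = c * snd x}"
  have L[measurable]: "L \<in> sets borel" unfolding L_def by measurable
  have "emeasure lborel L = (\<integral>\<^sup>+x. indicator L x \<partial>(lborel \<Otimes>\<^sub>M lborel))" by (simp add: lborel_prod)
  also have "\<dots> = (\<integral>\<^sup>+t. \<integral>\<^sup>+s. indicator L (s,t) \<partial>lborel \<partial>lborel)"
    by (rule lborel_pair.nn_integral_snd[symmetric]) (simp add: lborel_prod)
  also have "\<dots> = (\<integral>\<^sup>+t. 0 \<partial>(lborel::real measure))"
  proof (rule nn_integral_cong)
    fix t :: real
    have "(\<integral>\<^sup>+s. indicator L (s,t) \<partial>lborel) = (\<integral>\<^sup>+s. indicator {c*t} s \<partial>lborel)"
      by (intro nn_integral_cong) (auto simp: L_def indicator_def)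
    also have "\<dots> = 0" by simp
    finally show "(\<integral>\<^sup>+s. indicator L (s,t) \<partial>lborel) = 0" .
  qed
  also have "\<dots> = 0" by simp
  finally show ?thesis using L unfolding L_def[symmetric] by (auto intro: null_setsI)
qed



lemma S_bound:
  assumes u: "u > 0" "u \<noteq> 1" and st: "(s,t) \<in> S_u u"
  shows "\<bar>s\<bar> \<le> 2 \<and> 0 < t \<and> t \<le> 2"
proof (cases "u < 1")
  case True
  define w where "w = 1 - u^2"
  have w0: "w > 0" "w \<le> 1" using True u unfolding w_def by (auto simp: power_less_one_iff)
  have r1: "(1 - u^2) / \<bar>1 - u^2\<bar> = 1" using w0 unfolding w_def by simp
  define k where "k = 4 / sqrt \<bar>1 - u^2\<bar>"
  have sq: "sqrt w \<le> 1" "sqrt w > 0" using w0 by auto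
  have k4: "k \<ge> 4" unfolding k_def w_def[symmetric] using w0 sq
    by (simp add: divide_simps)
  have tp: "t > 0" and p0: "0 < - 2 * s^2 - t^2 + k * s * t" and p1: "- 2 * s^2 - t^2 + k * s * t \<le> 1"
    and q0: "0 < 2 * s^2 - t^2" and q1: "2 * s^2 - t^2 \<le> 1"
    using st r1 unfolding S_u_def p_u_def q_u_def k_def by auto
  have sp: "s > 0"
  proof (rule ccontr)
    assume "\<not> s > 0"
    hence "k * s * t \<le> 0" using k4 tp by (simp add: mult_nonneg_nonpos mult_nonpos_nonneg)
    thus False using p0 by (smt (verit) zero_le_power2)
  qed
  have kst: "4 * s * t \<le> k * s * t" using k4 sp tp by (simp add: mult_right_mono)
  have h1: "4 * s * t < 1 + 4 * s^2" using kst p1 q0 by linarith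
  have s2: "s^2 < 2"
  proof (rule ccontr)
    assume "\<not> s^2 < 2"
    hence s2: "s^2 \<ge> 2" by simp
    have "(4* s*t)^2 < (1 + 4* s^2)^2"
      using h1 sp tp by (intro power_strict_mono) auto
    hence "16 * s^2 * t^2 < (1 + 4* s^2)^2" by (simp add: power_mult_distrib)
    moreover have "16 * s^2 * t^2 \<ge> 16 * s^2 * (2* s^2 - 1)" using q1 by (simp add: mult_left_mono)
    ultimately have "16 * (s^2)^2 - 24 * s^2 - 1 < 0" by (simp add: power2_eq_square algebra_simps)
    moreover have "16 * (s^2)^2 \<ge> 32 * s^2" using mult_right_mono[OF s2, of "s^2"] by (simp add: power2_eq_square)
    ultimately show False using s2 by linarith
  qed
  have "s < 2" using power2_less_imp_less[of s 2] s2 by simp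
  moreover have "t^2 < 4" using s2 q0 by linarith
  hence "t < 2" using power2_less_imp_less[of t 2] by simp
  ultimately show ?thesis using sp tp by simp
next
  case False
  hence "u > 1" using u by simp
  hence "1 - u^2 < 0" using one_less_power[of u 2] by simp
  hence r1: "(1 - u^2) / \<bar>1 - u^2\<bar> = -1" by (simp add: divide_simps)
  have tp: "t > 0" and q1: "2 * s^2 + t^2 \<le> 1"
    using st r1 unfolding S_u_def q_u_def by auto
  have "s^2 \<le> 1" "t^2 \<le> 1" using q1 by (auto simp: power2_eq_square) (smt (verit) zero_le_square)+
  hence "\<bar>s\<bar> \<le> 1" "t \<le> 1" using tp by (auto simp: abs_square_le_1 power_le_one_iff)
  thus ?thesis using tp by simp
qed



lemma corr:
  fixes a b X s t :: real
  assumes a: "a > 0" and b: "b > 0" and ab: "a \<noteq> b" and X: "X > 0"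
  defines "D \<equiv> \<bar>a^2 - b^2\<bar>"
  shows "(sqrt X * s, sqrt X / sqrt D * t) \<in> R_reg a b X \<longleftrightarrow> (s,t) \<in> S_u (b/a)"
proof -
  define d where "d = a^2 - b^2"
  have dne: "d \<noteq> 0" using a b ab unfolding d_def by (smt (verit) power2_eq_iff_nonneg)
  have D: "D > 0" "D = \<bar>d\<bar>" using dne unfolding D_def d_def by auto
  define xs where "xs = sqrt X"
  define ds where "ds = sqrt D"
  have xs: "xs > 0" "xs^2 = X" using X unfolding xs_def by auto
  have ds: "ds > 0" "ds^2 = D" using D unfolding ds_def by auto
  have u1: "1 - (b/a)^2 = d / a^2" using a unfolding d_def by (simp add: field_simps)
  have u2: "\<bar>1 - (b/a)^2\<bar> = D / a^2" using u1 D by simp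
  have k1: "(1 - (b/a)^2) / \<bar>1 - (b/a)^2\<bar> = d / D" using u1 u2 a by simp
  have su: "sqrt \<bar>1 - (b/a)^2\<bar> = ds / a" using u2 a unfolding ds_def by (simp add: real_sqrt_divide)
  have k2: "4 / sqrt \<bar>1 - (b/a)^2\<bar> = 4 * a / ds" using su by simp
  have k3: "(1 - (b/a)^2) / sqrt \<bar>1 - (b/a)^2\<bar> = d / (a * ds)" apply (subst su) apply (subst u1) using a ds
    by (simp add: field_simps power2_eq_square)
  have e1: "Q1 a b (xs * s) (xs / ds * t) = - X * p_u (b/a) s t"
    unfolding Q1_def p_u_def k1 k2 d_def[symmetric] using xs ds D
    by (simp add: field_simps power2_eq_square)
  have e2: "Q2 a b (xs * s) (xs / ds * t) = - X * q_u (b/a) s t"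
    unfolding Q2_def q_u_def k1 d_def[symmetric] using xs ds D
    by (simp add: field_simps power2_eq_square)
  have e3: "Q3 a b (xs * s) (xs / ds * t) = - (a * X) * r_u (b/a) s t"
    unfolding Q3_def r_u_def k1 k3 d_def[symmetric] using xs ds D a
    by (simp add: field_simps power2_eq_square)
  have tt: "xs / ds * t > 0 \<longleftrightarrow> t > 0" using xs ds by (simp add: zero_less_mult_iff zero_less_divide_iff)
  have aX: "a * X > 0" using a X by simp
  show ?thesis
    unfolding R_reg_def S_u_def xs_def[symmetric] ds_def[symmetric]
    using e1 e2 e3 tt X aX
    by (auto simp: mult_less_0_iff zero_less_mult_iff mult_le_cancel_left1 minus_mult_left[symmetric]
        simp del: mult_minus_left)
qed


theorem lemma6p2:
  shows "(\<forall>(a::int) (b::int) (X::real). a > 0 \<and> b > 0 \<and> coprime a b \<and> a * b \<noteq> 1 \<and> X > 0 \<longrightarrow>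
            emeasure lborel (R_reg' (real_of_int a) (real_of_int b) X)
              = emeasure lborel (R_reg (real_of_int a) (real_of_int b) X)
          \<and> emeasure lborel (R_reg (real_of_int a) (real_of_int b) X)
              = ennreal (X / sqrt \<bar>(real_of_int a)^2 - (real_of_int b)^2\<bar>)
                * emeasure lborel (S_u (real_of_int b / real_of_int a)))
       \<and> (\<exists>c::real. c > 0 \<and>
            (\<forall>(a::int) (b::int) (X::real). a > 0 \<and> b > 0 \<and> coprime a b \<and> a * b \<noteq> 1 \<and> X > 0 \<longrightarrow>
               R_reg (real_of_int a) (real_of_int b) X
                 \<subseteq> {- c * sqrt X .. c * sqrt X}
                    \<times> {0 <.. c * sqrt (X / \<bar>(real_of_int a)^2 - (real_of_int b)^2\<bar>)})
          \<and> (\<forall>u::real. u > 0 \<and> u \<noteq> 1 \<longrightarrow> S_u u \<subseteq> {- c .. c} \<times> {0 <.. c}))"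
proof (intro conjI)
  show "\<forall>(a::int) (b::int) (X::real). a > 0 \<and> b > 0 \<and> coprime a b \<and> a * b \<noteq> 1 \<and> X > 0 \<longrightarrow>
            emeasure lborel (R_reg' (real_of_int a) (real_of_int b) X)
              = emeasure lborel (R_reg (real_of_int a) (real_of_int b) X)
          \<and> emeasure lborel (R_reg (real_of_int a) (real_of_int b) X)
              = ennreal (X / sqrt \<bar>(real_of_int a)^2 - (real_of_int b)^2\<bar>)
                * emeasure lborel (S_u (real_of_int b / real_of_int a))"
  proof (intro allI impI)
    fix a b :: int and X :: real
    assume h: "a > 0 \<and> b > 0 \<and> coprime a b \<and> a * b \<noteq> 1 \<and> X > 0"
    define A where "A = real_of_int a"
    define B where "B = real_of_int b"
    have A: "A > 0" and B: "B > 0" and X: "X > 0" using h unfolding A_def B_def by auto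
    have "a \<noteq> b" using h by auto
    hence AB: "A \<noteq> B" unfolding A_def B_def by simp
    define D where "D = \<bar>A^2 - B^2\<bar>"
    have Dp: "D > 0" using A B AB unfolding D_def by (smt (verit) power2_eq_iff_nonneg)
    have Rm: "R_reg A B X \<in> sets borel"
      unfolding R_reg_def Q1_def Q2_def Q3_def split_beta' by measurable
    have Sm: "S_u (B/A) \<in> sets borel"
      unfolding S_u_def p_u_def q_u_def r_u_def split_beta' by measurable
    have seteq: "{x. (sqrt X * fst x, sqrt X / sqrt D * snd x) \<in> R_reg A B X} = S_u (B/A)"
      using corr[OF A B AB X] unfolding D_def by auto
    have "emeasure lborel (R_reg A B X) = ennreal (sqrt X * (sqrt X / sqrt D)) * emeasure lborel (S_u (B/A))"
      using scale2[OF Rm, of "sqrt X" "sqrt X / sqrt D"] X Dp seteq by simp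
    also have "sqrt X * (sqrt X / sqrt D) = X / sqrt D" using X by simp
    finally have m1: "emeasure lborel (R_reg A B X) = ennreal (X / sqrt D) * emeasure lborel (S_u (B/A))" .
    define N where "N = {x::real\<times>real. fst x = 0 * snd x} \<union> {x. fst x = A * snd x}
       \<union> {x. fst x = ((A^2 - B^2) / (2*A)) * snd x}"
    have Nn: "N \<in> null_sets lborel" unfolding N_def by (intro null_sets.Un line_null)
    have pw: "(s,t) \<in> R_reg' A B X \<longleftrightarrow> (s,t) \<in> R_reg A B X - N" for s t
    proof (cases "t > 0")
      case True
      have e: "s / t = k \<longleftrightarrow> s = k * t" for k using True by (auto simp: divide_eq_eq)
      show ?thesis unfolding R_reg'_def N_def using e by auto
    next
      case False
      thus ?thesis unfolding R_reg'_def R_reg_def by auto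
    qed
    have "R_reg' A B X = R_reg A B X - N"
    proof (rule set_eqI)
      fix x show "x \<in> R_reg' A B X \<longleftrightarrow> x \<in> R_reg A B X - N" using pw[of "fst x" "snd x"] by simp
    qed
    hence m2: "emeasure lborel (R_reg' A B X) = emeasure lborel (R_reg A B X)"
      using emeasure_Diff_null_set[OF Nn] Rm by simp
    show "emeasure lborel (R_reg' (real_of_int a) (real_of_int b) X)
              = emeasure lborel (R_reg (real_of_int a) (real_of_int b) X)
          \<and> emeasure lborel (R_reg (real_of_int a) (real_of_int b) X)
              = ennreal (X / sqrt \<bar>(real_of_int a)^2 - (real_of_int b)^2\<bar>)
                * emeasure lborel (S_u (real_of_int b / real_of_int a))"
      using m1 m2 unfolding A_def[symmetric] B_def[symmetric] D_def by simp
  qed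
next
  show "\<exists>c::real. c > 0 \<and>
            (\<forall>(a::int) (b::int) (X::real). a > 0 \<and> b > 0 \<and> coprime a b \<and> a * b \<noteq> 1 \<and> X > 0 \<longrightarrow>
               R_reg (real_of_int a) (real_of_int b) X
                 \<subseteq> {- c * sqrt X .. c * sqrt X}
                    \<times> {0 <.. c * sqrt (X / \<bar>(real_of_int a)^2 - (real_of_int b)^2\<bar>)})
          \<and> (\<forall>u::real. u > 0 \<and> u \<noteq> 1 \<longrightarrow> S_u u \<subseteq> {- c .. c} \<times> {0 <.. c})"
  proof (intro exI[of _ 2] conjI allI impI)
    show "(2::real) > 0" by simp
  next
    fix u :: real assume "u > 0 \<and> u \<noteq> 1"
    hence u: "u > 0" "u \<noteq> 1" by auto
    show "S_u u \<subseteq> {- 2 .. 2} \<times> {0 <.. 2}"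
    proof
      fix x assume x: "x \<in> S_u u"
      obtain s t where st: "x = (s,t)" by (cases x)
      have "\<bar>s\<bar> \<le> 2 \<and> 0 < t \<and> t \<le> 2" using S_bound[OF u] x st by blast
      thus "x \<in> {- 2 .. 2} \<times> {0 <.. 2}" using st by (auto simp: abs_le_iff)
    qed
  next
    fix a b :: int and X :: real
    assume h: "a > 0 \<and> b > 0 \<and> coprime a b \<and> a * b \<noteq> 1 \<and> X > 0"
    define A where "A = real_of_int a"
    define B where "B = real_of_int b"
    have A: "A > 0" and B: "B > 0" and X: "X > 0" using h unfolding A_def B_def by auto
    have "a \<noteq> b" using h by auto
    hence AB: "A \<noteq> B" unfolding A_def B_def by simp
    define D where "D = \<bar>A^2 - B^2\<bar>"
    have Dp: "D > 0" using A B AB unfolding D_def by (smt (verit) power2_eq_iff_nonneg)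
    have "R_reg A B X \<subseteq> {- 2 * sqrt X .. 2 * sqrt X} \<times> {0 <.. 2 * sqrt (X / D)}"
    proof
      fix x assume x: "x \<in> R_reg A B X"
      obtain s t where st: "x = (s,t)" by (cases x)
      define s' where "s' = s / sqrt X"
      define t' where "t' = t * sqrt D / sqrt X"
      have "sqrt X * s' = s" "sqrt X / sqrt D * t' = t" using X Dp unfolding s'_def t'_def by auto
      hence "(s', t') \<in> S_u (B/A)" using corr[OF A B AB X, of s' t'] x st unfolding D_def by simp
      moreover have "B/A > 0" "B/A \<noteq> 1" using A B AB by auto
      ultimately have bd: "\<bar>s'\<bar> \<le> 2" "0 < t'" "t' \<le> 2" using S_bound by blast+
      have "\<bar>s\<bar> \<le> 2 * sqrt X" using bd X unfolding s'_def by (simp add: abs_div divide_le_eq)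
      moreover have "t > 0" using bd X Dp unfolding t'_def by (simp add: zero_less_divide_iff zero_less_mult_iff)
      moreover have "t \<le> 2 * sqrt X / sqrt D" using bd X Dp unfolding t'_def by (simp add: divide_le_eq le_divide_eq)
      ultimately show "x \<in> {- 2 * sqrt X .. 2 * sqrt X} \<times> {0 <.. 2 * sqrt (X / D)}"
        using st by (auto simp: abs_le_iff real_sqrt_divide)
    qed
    thus "R_reg (real_of_int a) (real_of_int b) X
                 \<subseteq> {- 2 * sqrt X .. 2 * sqrt X}
                    \<times> {0 <.. 2 * sqrt (X / \<bar>(real_of_int a)^2 - (real_of_int b)^2\<bar>)}"
      unfolding A_def B_def D_def .
  qed
qed

end
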